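(* For every $n\ge3$, the toric ideal $I_{\mathbb{Z}_2,n}$ is generated by binomials of degree two.
   Context: For a finite abelian group $G$ (written additively) and integer $n\ge2$, $I_{G,n}$ denotes the kernel of the $\mathbb{C}$-algebra homomorphism $$\mathbb{C}[q_{g_1,\dots,g_n}: g_1,\dots,g_n\in G]\to\mathbb{C}[a^{(i)}_g: g\in G,\ i=1,\dots,n+1],\qquad q_{g_1,\dots,g_n}\mapsto a^{(1)}_{g_1}a^{(2)}_{g_2}\cdots a^{(n)}_{g_n}\,a^{(n+1)}_{g_1+\cdots+g_n}.$$ *)

theory Defs
  imports Complex_Main "HOL-Library.Poly_Mapping" "HOL-Library.Numeral_Type"
begin

text \<open>Multivariate polynomials over the complex numbers in variables of type 'v:
  finitely supported maps from monomials (exponent vectors 'v =>0 nat) to coefficients.\<close>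
type_synonym 'v cpoly = "('v \<Rightarrow>\<^sub>0 nat) \<Rightarrow>\<^sub>0 complex"

definition monom :: "('v \<Rightarrow>\<^sub>0 nat) \<Rightarrow> 'v cpoly" where
  "monom \<alpha> = Poly_Mapping.single \<alpha> 1"

definition Var :: "'v \<Rightarrow> 'v cpoly" where
  "Var v = monom (Poly_Mapping.single v 1)"

definition monom_deg :: "('v \<Rightarrow>\<^sub>0 nat) \<Rightarrow> nat" where
  "monom_deg \<alpha> = (\<Sum>v\<in>Poly_Mapping.keys \<alpha>. Poly_Mapping.lookup \<alpha> v)"

text \<open>The variables q_(g_1,...,g_n) are indexed by lists of length n over the group 'g.
  The polynomial ring C[q_g : g in G^n] is the set of polynomials only using such variables.\<close>
definition in_qring :: "nat \<Rightarrow> ('g list) cpoly \<Rightarrow> bool" where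
  "in_qring n p \<longleftrightarrow> (\<forall>m\<in>Poly_Mapping.keys p. \<forall>v\<in>Poly_Mapping.keys m. length v = n)"

text \<open>Image of q_(g_1..g_n): a^(1)_(g_1) ... a^(n)_(g_n) a^(n+1)_(g_1+...+g_n);
  the variable a^(i)_g is Var (i, g).\<close>
definition toric_image :: "nat \<Rightarrow> ('g::ab_group_add) list \<Rightarrow> (nat \<times> 'g) cpoly" where
  "toric_image n g = (\<Prod>i<n. Var (i + 1, g ! i)) * Var (n + 1, sum_list g)"

definition toric_hom :: "nat \<Rightarrow> ('g::ab_group_add) list cpoly \<Rightarrow> (nat \<times> 'g) cpoly" where
  "toric_hom n p = (\<Sum>m\<in>Poly_Mapping.keys p. Poly_Mapping.single 0 (Poly_Mapping.lookup p m) *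
                      (\<Prod>v\<in>Poly_Mapping.keys m. toric_image n v ^ Poly_Mapping.lookup m v))"

definition toric_ideal :: "nat \<Rightarrow> ('g::{finite,ab_group_add}) list cpoly set" where
  "toric_ideal n = {p. in_qring n p \<and> toric_hom n p = 0}"

definition qideal_gen :: "nat \<Rightarrow> ('g list) cpoly set \<Rightarrow> ('g list) cpoly set" where
  "qideal_gen n S = {p. \<exists>F r. finite F \<and> F \<subseteq> S \<and> (\<forall>s\<in>F. in_qring n (r s))
                          \<and> p = (\<Sum>s\<in>F. r s * s)}"

definition deg2_binomial :: "nat \<Rightarrow> ('g list) cpoly \<Rightarrow> bool" where
  "deg2_binomial n b \<longleftrightarrow> (\<exists>\<alpha> \<beta>. (\<forall>v\<in>Poly_Mapping.keys \<alpha>. length v = n) \<and> (\<forall>v\<in>Poly_Mapping.keys \<beta>. length v = n)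
       \<and> monom_deg \<alpha> = 2 \<and> monom_deg \<beta> = 2 \<and> b = monom \<alpha> - monom \<beta>)"

end

theory Submission
  imports Defs
begin


lemma pm_sum_singles: "(\<Sum>k\<in>Poly_Mapping.keys p. Poly_Mapping.single k (Poly_Mapping.lookup p k)) = p"
  by (rule poly_mapping_eqI) (simp add: lookup_sum lookup_single when_def in_keys_iff sum.delta' split: if_splits)

lemma prod_single_one:
  "finite A \<Longrightarrow> (\<Prod>i\<in>A. Poly_Mapping.single (f i) (1::'b::comm_semiring_1)) = Poly_Mapping.single (\<Sum>i\<in>A. f i) 1"
  by (induction A rule: finite_induct) (simp_all add: mult_single)

lemma power_single_one:
  "(Poly_Mapping.single a (1::'b::comm_semiring_1)) ^ k = Poly_Mapping.single (\<Sum>j<k. a) 1"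
  by (induction k) (simp_all add: mult_single add.commute)

definition ext :: "nat \<Rightarrow> ('g::ab_group_add) list \<Rightarrow> nat \<Rightarrow> 'g" where
  "ext n v l = (if l < n then v ! l else sum_list v)"

definition img :: "nat \<Rightarrow> ('g::ab_group_add) list \<Rightarrow> (nat \<times> 'g) \<Rightarrow>\<^sub>0 nat" where
  "img n v = (\<Sum>l\<le>n. Poly_Mapping.single (Suc l, ext n v l) 1)"

lemma toric_image_eq: "toric_image n v = Poly_Mapping.single (img n v) 1"
proof -
  have "(\<Prod>i<n. Var (i + 1, v ! i)) = Poly_Mapping.single (\<Sum>i<n. Poly_Mapping.single (i + 1, v ! i) 1) 1"
    unfolding Var_def monom_def by (rule prod_single_one) simp
  moreover have "img n v = (\<Sum>i<n. Poly_Mapping.single (i + 1, v ! i) 1) + Poly_Mapping.single (n + 1, sum_list v) 1"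
    unfolding img_def by (simp add: lessThan_Suc_atMost[symmetric] ext_def)
  ultimately show ?thesis unfolding toric_image_def by (simp add: Var_def monom_def mult_single)
qed

definition Phi :: "nat \<Rightarrow> (('g::ab_group_add) list \<Rightarrow>\<^sub>0 nat) \<Rightarrow> (nat \<times> 'g) \<Rightarrow>\<^sub>0 nat" where
  "Phi n m = (\<Sum>v\<in>Poly_Mapping.keys m. \<Sum>j<Poly_Mapping.lookup m v. img n v)"

lemma prod_image_eq: "(\<Prod>v\<in>Poly_Mapping.keys m. toric_image n v ^ Poly_Mapping.lookup m v) = Poly_Mapping.single (Phi n m) 1"
  unfolding toric_image_eq power_single_one Phi_def by (rule prod_single_one) simp

lemma toric_hom_eq: "toric_hom n p = (\<Sum>m\<in>Poly_Mapping.keys p. Poly_Mapping.single (Phi n m) (Poly_Mapping.lookup p m))"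
  unfolding toric_hom_def prod_image_eq by (simp add: mult_single)

lemma lookup_Phi_gen: "finite K \<Longrightarrow> Poly_Mapping.keys m \<subseteq> K \<Longrightarrow>
   Poly_Mapping.lookup (Phi n m) x = (\<Sum>v\<in>K. Poly_Mapping.lookup m v * Poly_Mapping.lookup (img n v) x)"
  unfolding Phi_def lookup_sum by simp (rule sum.mono_neutral_left, auto simp: in_keys_iff)

lemma Phi_add: "Phi n (m1 + m2) = Phi n m1 + Phi n m2"
proof (rule poly_mapping_eqI)
  fix x
  let ?K = "Poly_Mapping.keys m1 \<union> Poly_Mapping.keys m2"
  have K: "finite ?K" by simp
  show "Poly_Mapping.lookup (Phi n (m1 + m2)) x = Poly_Mapping.lookup (Phi n m1 + Phi n m2) x"
    using keys_add[of m1 m2]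
    by (simp add: lookup_add lookup_Phi_gen[OF K] algebra_simps sum.distrib)
qed

lemma toric_hom_gen: "finite K \<Longrightarrow> Poly_Mapping.keys p \<subseteq> K \<Longrightarrow>
  toric_hom n p = (\<Sum>m\<in>K. Poly_Mapping.single (Phi n m) (Poly_Mapping.lookup p m))"
  unfolding toric_hom_eq by (rule sum.mono_neutral_left) (auto simp: in_keys_iff)

lemma toric_hom_add: "toric_hom n (p + q) = toric_hom n p + toric_hom n q"
proof -
  let ?K = "Poly_Mapping.keys p \<union> Poly_Mapping.keys q"
  have K: "finite ?K" by simp
  show ?thesis using keys_add[of p q]
    by (simp add: toric_hom_gen[OF K] lookup_add single_add sum.distrib)
qed

lemma toric_hom_zero [simp]: "toric_hom n 0 = 0"
  by (simp add: toric_hom_eq)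

lemma toric_hom_uminus: "toric_hom n (- p) = - toric_hom n p"
  by (simp add: toric_hom_eq keys_minus single_uminus sum_negf)

lemma toric_hom_diff: "toric_hom n (p - q) = toric_hom n p - toric_hom n q"
  using toric_hom_add[of n p "-q"] by (simp add: toric_hom_uminus)

lemma toric_hom_single: "toric_hom n (Poly_Mapping.single m c) = Poly_Mapping.single (Phi n m) c"
  by (simp add: toric_hom_eq)

lemma toric_hom_sum: "toric_hom n (\<Sum>x\<in>X. f x) = (\<Sum>x\<in>X. toric_hom n (f x))"
  by (induction X rule: infinite_finite_induct) (simp_all add: toric_hom_add)

lemma toric_hom_mult_monom:
  "toric_hom n (r * monom \<alpha>) = (\<Sum>m\<in>Poly_Mapping.keys r. Poly_Mapping.single (Phi n m + Phi n \<alpha>) (Poly_Mapping.lookup r m))"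
proof -
  have "r * monom \<alpha> = (\<Sum>m\<in>Poly_Mapping.keys r. Poly_Mapping.single m (Poly_Mapping.lookup r m)) * monom \<alpha>"
    by (simp add: pm_sum_singles)
  also have "\<dots> = (\<Sum>m\<in>Poly_Mapping.keys r. Poly_Mapping.single (m + \<alpha>) (Poly_Mapping.lookup r m))"
    by (simp add: sum_distrib_right monom_def mult_single)
  finally show ?thesis by (simp add: toric_hom_sum toric_hom_single Phi_add)
qed

lemma toric_hom_binom:
  assumes "Phi n \<alpha> = Phi n \<beta>"
  shows "toric_hom n (r * (monom \<alpha> - monom \<beta>)) = 0"
  using assms by (simp add: right_diff_distrib toric_hom_diff toric_hom_mult_monom)

lemma in_qring_zero [simp]: "in_qring n 0"
  by (simp add: in_qring_def)

lemma in_qring_add: "in_qring n p \<Longrightarrow> in_qring n q \<Longrightarrow> in_qring n (p + q)"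
  using keys_add[of p q] unfolding in_qring_def by blast

lemma keys_add_nat: "Poly_Mapping.keys (a + b :: 'x \<Rightarrow>\<^sub>0 nat) = Poly_Mapping.keys a \<union> Poly_Mapping.keys b"
  by (auto simp: in_keys_iff lookup_add)

lemma in_qring_mult: "in_qring n p \<Longrightarrow> in_qring n q \<Longrightarrow> in_qring n (p * q)"
  using keys_mult[of p q] unfolding in_qring_def by (fastforce simp: keys_add_nat)

lemma in_qring_single0 [simp]: "in_qring n (Poly_Mapping.single 0 c)"
  by (simp add: in_qring_def)

lemma in_qring_one [simp]: "in_qring n 1"
  by (simp add: in_qring_def)

lemma in_qring_monom: "(\<forall>v\<in>Poly_Mapping.keys \<alpha>. length v = n) \<Longrightarrow> in_qring n (monom \<alpha>)"
  by (simp add: in_qring_def monom_def)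

lemma in_qring_uminus: "in_qring n p \<Longrightarrow> in_qring n (- p)"
  by (simp add: in_qring_def keys_minus)

lemma in_qring_sum: "(\<And>x. x \<in> X \<Longrightarrow> in_qring n (f x)) \<Longrightarrow> in_qring n (\<Sum>x\<in>X. f x)"
  by (induction X rule: infinite_finite_induct) (simp_all add: in_qring_add)

lemma qideal_zero: "0 \<in> qideal_gen n S"
  unfolding qideal_gen_def by (rule CollectI, rule exI[of _ "{}"]) simp

lemma qideal_gen_in: "s \<in> S \<Longrightarrow> s \<in> qideal_gen n S"
  unfolding qideal_gen_def by (rule CollectI, rule exI[of _ "{s}"], rule exI[of _ "\<lambda>_. 1"]) simp

lemma qideal_add:
  assumes "p \<in> qideal_gen n S" "q \<in> qideal_gen n S"
  shows "p + q \<in> qideal_gen n S"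
proof -
  obtain F1 r1 where 1: "finite F1" "F1 \<subseteq> S" "\<forall>s\<in>F1. in_qring n (r1 s)" "p = (\<Sum>s\<in>F1. r1 s * s)"
    using assms(1) unfolding qideal_gen_def by blast
  obtain F2 r2 where 2: "finite F2" "F2 \<subseteq> S" "\<forall>s\<in>F2. in_qring n (r2 s)" "q = (\<Sum>s\<in>F2. r2 s * s)"
    using assms(2) unfolding qideal_gen_def by blast
  define r where "r s = (if s \<in> F1 then r1 s else 0) + (if s \<in> F2 then r2 s else 0)" for s
  have "(\<Sum>s\<in>F1 \<union> F2. r s * s) = (\<Sum>s\<in>F1 \<union> F2. (if s \<in> F1 then r1 s * s else 0)) + (\<Sum>s\<in>F1 \<union> F2. (if s \<in> F2 then r2 s * s else 0))"
    unfolding sum.distrib[symmetric] by (rule sum.cong) (auto simp: r_def distrib_right)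
  also have "\<dots> = p + q"
    using 1 2 by (simp add: sum.If_cases Int_absorb1 Int_absorb2 Un_Int_eq)
  finally have "p + q = (\<Sum>s\<in>F1 \<union> F2. r s * s)" by simp
  moreover have "\<forall>s\<in>F1 \<union> F2. in_qring n (r s)"
    using 1 2 unfolding r_def by (auto intro!: in_qring_add)
  ultimately show ?thesis using 1 2 unfolding qideal_gen_def
    by (intro CollectI exI[of _ "F1 \<union> F2"] exI[of _ r]) simp
qed

lemma qideal_mult:
  assumes "p \<in> qideal_gen n S" "in_qring n q"
  shows "q * p \<in> qideal_gen n S"
proof -
  obtain F1 r1 where 1: "finite F1" "F1 \<subseteq> S" "\<forall>s\<in>F1. in_qring n (r1 s)" "p = (\<Sum>s\<in>F1. r1 s * s)"
    using assms(1) unfolding qideal_gen_def by blast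
  have "q * p = (\<Sum>s\<in>F1. (q * r1 s) * s)" using 1 by (simp add: sum_distrib_left mult.assoc)
  moreover have "\<forall>s\<in>F1. in_qring n (q * r1 s)" using 1 assms(2) by (auto intro: in_qring_mult)
  ultimately show ?thesis using 1 unfolding qideal_gen_def
    by (intro CollectI exI[of _ F1] exI[of _ "\<lambda>s. q * r1 s"]) simp
qed

lemma qideal_uminus:
  assumes "p \<in> qideal_gen n S"
  shows "- p \<in> qideal_gen n S"
proof -
  obtain F1 r1 where 1: "finite F1" "F1 \<subseteq> S" "\<forall>s\<in>F1. in_qring n (r1 s)" "p = (\<Sum>s\<in>F1. r1 s * s)"
    using assms(1) unfolding qideal_gen_def by blast
  have "- p = (\<Sum>s\<in>F1. (- r1 s) * s)" using 1 by (simp add: sum_negf)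
  moreover have "\<forall>s\<in>F1. in_qring n (- r1 s)" using 1 by (auto intro: in_qring_uminus)
  ultimately show ?thesis using 1 unfolding qideal_gen_def
    by (intro CollectI exI[of _ F1] exI[of _ "\<lambda>s. - r1 s"]) simp
qed

lemma qideal_diff: "p \<in> qideal_gen n S \<Longrightarrow> q \<in> qideal_gen n S \<Longrightarrow> p - q \<in> qideal_gen n S"
  using qideal_add[of p n S "-q"] qideal_uminus[of q n S] by simp



lemma two_cases: "(x::2) = 0 \<or> x = 1"
proof (cases x)
  case (of_int z)
  then have "z = 0 \<or> z = 1" by auto
  then show ?thesis using of_int by auto
qed

lemma two_ne: "(x::2) \<noteq> y \<Longrightarrow> x + 1 = y"
  using two_cases[of x] two_cases[of y] by auto

lemma two_plus1: "(x::2) + 1 \<noteq> x"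
  using two_cases[of x] by auto

lemma two_third: "(x::2) \<noteq> y \<Longrightarrow> z \<noteq> x \<Longrightarrow> z = y"
  using two_cases[of x] two_cases[of y] two_cases[of z] by auto

lemma lookup_img: "l \<le> n \<Longrightarrow> Poly_Mapping.lookup (img n v) (Suc l, c) = (if ext n v l = c then 1 else 0)"
proof -
  assume l: "l \<le> n"
  have "Poly_Mapping.lookup (img n v) (Suc l, c) = (\<Sum>l'\<le>n. if l' = l then (if ext n v l = c then 1 else 0) else 0)"
    unfolding img_def lookup_sum by (rule sum.cong) (auto simp: lookup_single when_def)
  also have "\<dots> = (if ext n v l = c then 1 else 0)" using l by (simp add: sum.delta)
  finally show ?thesis .
qed

lemma lookup_Phi: "l \<le> n \<Longrightarrow> Poly_Mapping.lookup (Phi n \<alpha>) (Suc l, c) =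
   (\<Sum>v\<in>Poly_Mapping.keys \<alpha>. Poly_Mapping.lookup \<alpha> v * (if ext n v l = c then 1 else 0))"
  by (simp add: lookup_Phi_gen[of "Poly_Mapping.keys \<alpha>"] lookup_img)

lemma sum_if_card: "finite D \<Longrightarrow> (\<Sum>l\<in>D. if P l then 1 else (0::nat)) = card {l\<in>D. P l}"
proof -
  assume f: "finite D"
  have "(\<Sum>l\<in>D. if P l then 1 else (0::nat)) = (\<Sum>l\<in>D \<inter> {l. P l}. 1)"
    using sum.inter_restrict[OF f, of "\<lambda>_. 1::nat" "{l. P l}"] by simp
  also have "\<dots> = card (D \<inter> {l. P l})" by simp
  also have "D \<inter> {l. P l} = {l\<in>D. P l}" by blast
  finally show ?thesis .
qed

lemma count_identity:
  assumes "D \<subseteq> {..n}"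
  shows "(\<Sum>l\<in>D. Poly_Mapping.lookup (Phi n \<alpha>) (Suc l, ext n a l)) =
     (\<Sum>v\<in>Poly_Mapping.keys \<alpha>. Poly_Mapping.lookup \<alpha> v * card {l\<in>D. ext n v l = ext n a l})"
proof -
  have fD: "finite D" using assms finite_subset by blast
  have "(\<Sum>l\<in>D. Poly_Mapping.lookup (Phi n \<alpha>) (Suc l, ext n a l)) =
     (\<Sum>l\<in>D. \<Sum>v\<in>Poly_Mapping.keys \<alpha>. Poly_Mapping.lookup \<alpha> v * (if ext n v l = ext n a l then 1 else 0))"
    by (rule sum.cong) (use assms in \<open>auto simp: lookup_Phi\<close>)
  also have "\<dots> = (\<Sum>v\<in>Poly_Mapping.keys \<alpha>. \<Sum>l\<in>D. Poly_Mapping.lookup \<alpha> v * (if ext n v l = ext n a l then 1 else 0))"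
    by (rule sum.swap)
  also have "\<dots> = (\<Sum>v\<in>Poly_Mapping.keys \<alpha>. Poly_Mapping.lookup \<alpha> v * card {l\<in>D. ext n v l = ext n a l})"
    by (rule sum.cong) (simp_all add: sum_distrib_left[symmetric] fD sum_if_card)
  finally show ?thesis .
qed

lemma monom_deg_gen: "finite K \<Longrightarrow> Poly_Mapping.keys \<alpha> \<subseteq> K \<Longrightarrow> monom_deg \<alpha> = (\<Sum>v\<in>K. Poly_Mapping.lookup \<alpha> v)"
  unfolding monom_deg_def by (rule sum.mono_neutral_left) (auto simp: in_keys_iff)

lemma monom_deg_add: "monom_deg (\<alpha> + \<beta>) = monom_deg \<alpha> + monom_deg \<beta>"
proof -
  let ?K = "Poly_Mapping.keys \<alpha> \<union> Poly_Mapping.keys \<beta>"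
  have K: "finite ?K" by simp
  show ?thesis using keys_add[of \<alpha> \<beta>]
    by (simp add: monom_deg_gen[OF K] lookup_add sum.distrib)
qed

lemma monom_deg_single: "monom_deg (Poly_Mapping.single x k) = k"
  by (simp add: monom_deg_def)

lemma monom_deg_zero: "monom_deg \<alpha> = 0 \<Longrightarrow> \<alpha> = 0"
proof -
  assume "monom_deg \<alpha> = 0"
  then have "\<forall>v\<in>Poly_Mapping.keys \<alpha>. Poly_Mapping.lookup \<alpha> v = 0" unfolding monom_deg_def by simp
  then have "\<forall>v. Poly_Mapping.lookup \<alpha> v = 0" by (auto simp: in_keys_iff)
  then show ?thesis by (intro poly_mapping_eqI) simp
qed

lemma Phi_deg:
  fixes \<alpha> \<beta> :: "2 list \<Rightarrow>\<^sub>0 nat"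
  assumes "Phi n \<alpha> = Phi n \<beta>"
  shows "monom_deg \<alpha> = monom_deg \<beta>"
proof -
  have key: "monom_deg \<gamma> = Poly_Mapping.lookup (Phi n \<gamma>) (Suc 0, 0) + Poly_Mapping.lookup (Phi n \<gamma>) (Suc 0, 1)"
    for \<gamma> :: "2 list \<Rightarrow>\<^sub>0 nat"
  proof -
    have "Poly_Mapping.lookup (Phi n \<gamma>) (Suc 0, 0) + Poly_Mapping.lookup (Phi n \<gamma>) (Suc 0, 1) =
      (\<Sum>v\<in>Poly_Mapping.keys \<gamma>. Poly_Mapping.lookup \<gamma> v * (if ext n v 0 = 0 then 1 else 0) +
         Poly_Mapping.lookup \<gamma> v * (if ext n v 0 = 1 then 1 else 0))"
      by (simp add: lookup_Phi sum.distrib)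
    also have "\<dots> = monom_deg \<gamma>" unfolding monom_deg_def
    proof (rule sum.cong)
      fix v
      have "(if ext n v 0 = (0::2) then 1 else 0) + (if ext n v 0 = 1 then 1 else 0) = (1::nat)"
        using two_cases[of "ext n v 0"] by auto
      then show "Poly_Mapping.lookup \<gamma> v * (if ext n v 0 = 0 then 1 else 0) +
         Poly_Mapping.lookup \<gamma> v * (if ext n v 0 = 1 then 1 else 0) = Poly_Mapping.lookup \<gamma> v"
        by (metis distrib_left mult.right_neutral)
    qed simp
    finally show ?thesis by simp
  qed
  show ?thesis using key[of \<alpha>] key[of \<beta>] assms by simp
qed

lemma Phi_single: "Phi n (Poly_Mapping.single x 1) = img n x"
  by (simp add: Phi_def)

lemma monom_add: "monom (x + y) = monom x * monom y"
  by (simp add: monom_def mult_single)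

lemma ext_inj:
  assumes "length a = n" "length b = n" "\<forall>l\<le>n. ext n a l = ext n b l"
  shows "a = b"
proof (rule nth_equalityI)
  show "length a = length b" using assms by simp
  fix i assume "i < length a"
  then show "a ! i = b ! i" using assms(3)[rule_format, of i] assms(1) by (simp add: ext_def)
qed

lemma sum_list_nth: "sum_list xs = (\<Sum>j<length xs. xs ! j)"
  by (simp add: sum_list_sum_nth atLeast0LessThan)

lemma card_D_ne1:
  fixes a b :: "2 list"
  assumes "length a = n" "length b = n"
  shows "card {l\<in>{..n}. ext n a l \<noteq> ext n b l} \<noteq> 1"
proof
  assume "card {l\<in>{..n}. ext n a l \<noteq> ext n b l} = 1"
  then obtain l where l: "{l\<in>{..n}. ext n a l \<noteq> ext n b l} = {l}" by (auto simp: card_Suc_eq)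
  then have ln: "l \<le> n" and ne: "ext n a l \<noteq> ext n b l" and eq: "\<And>j. j \<le> n \<Longrightarrow> j \<noteq> l \<Longrightarrow> ext n a j = ext n b j"
    by blast+
  show False
  proof (cases "l < n")
    case True
    have "sum_list a - sum_list b = (\<Sum>j<n. a ! j - b ! j)"
      using assms by (simp add: sum_list_nth sum_subtractf)
    also have "\<dots> = (\<Sum>j<n. if j = l then a ! l - b ! l else 0)"
      proof (rule sum.cong)
      fix j assume j: "j \<in> {..<n}"
      show "a ! j - b ! j = (if j = l then a ! l - b ! l else 0)" using eq[of j] j by (auto simp: ext_def)
    qed simp
    also have "\<dots> = a ! l - b ! l" using True by simp
    finally have "sum_list a - sum_list b = a ! l - b ! l" .
    moreover have "a ! l \<noteq> b ! l" using ne True by (simp add: ext_def)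
    moreover have "sum_list a = sum_list b" using eq[of n] True by (simp add: ext_def)
    ultimately show False by simp
  next
    case False
    then have "l = n" using ln by simp
    have "a = b"
    proof (rule nth_equalityI)
      show "length a = length b" using assms by simp
      fix j assume "j < length a"
      then show "a ! j = b ! j" using eq[of j] assms \<open>l = n\<close> by (simp add: ext_def)
    qed
    then show False using ne by simp
  qed
qed

definition dl :: "nat \<Rightarrow> nat \<Rightarrow> nat \<Rightarrow> 2 list" where
  "dl n i k = map (\<lambda>j. if j = i \<or> j = k then 1 else 0) [0..<n]"

lemma sum_list_map2_plus: "length a = length b \<Longrightarrow> sum_list (map2 (+) a b) = sum_list a + sum_list (b :: 'g::ab_group_add list)"
  by (induction a b rule: list_induct2) (simp_all add: algebra_simps)

lemma ext_map2: "length a = n \<Longrightarrow> length b = n \<Longrightarrow> l \<le> n \<Longrightarrow> ext n (map2 (+) a b) l = ext n a l + ext n b l"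
  by (auto simp: ext_def sum_list_map2_plus)

lemma ext_dl:
  assumes "i \<noteq> k" "i \<le> n" "k \<le> n" "l \<le> n"
  shows "ext n (dl n i k) l = (if l = i \<or> l = k then 1 else 0)"
proof (cases "l < n")
  case True then show ?thesis by (simp add: ext_def dl_def)
next
  case False
  then have ln: "l = n" using assms by simp
  have "sum_list (dl n i k) = (\<Sum>j<n. if j \<in> {i, k} then (1::2) else 0)"
    by (simp add: dl_def sum_list_nth)
  also have "\<dots> = of_nat (card ({..<n} \<inter> {i, k}))"
    by (simp only: sum.inter_restrict[symmetric] finite_lessThan sum_constant mult_1_right)
  also have "\<dots> = (if n = i \<or> n = k then 1 else 0)"
  proof (cases "n = i \<or> n = k")
    case True
    then have "{..<n} \<inter> {i, k} = (if n = i then {k} else {i})" using assms by auto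
    then show ?thesis using True by simp
  next
    case False
    then have "{..<n} \<inter> {i, k} = {i, k}" using assms by auto
    then show ?thesis using False assms by simp
  qed
  finally show ?thesis using ln by (simp add: ext_def)
qed

lemma length_dl [simp]: "length (dl n i k) = n"
  by (simp add: dl_def)



definition vok :: "nat \<Rightarrow> ('g list \<Rightarrow>\<^sub>0 nat) \<Rightarrow> bool" where
  "vok n \<alpha> \<longleftrightarrow> (\<forall>v\<in>Poly_Mapping.keys \<alpha>. length v = n)"

definition Bset :: "nat \<Rightarrow> ('g::ab_group_add) list cpoly set" where
  "Bset n = {monom \<alpha> - monom \<beta> | \<alpha> \<beta>. vok n \<alpha> \<and> vok n \<beta> \<and> monom_deg \<alpha> = 2 \<and> monom_deg \<beta> = 2 \<and> Phi n \<alpha> = Phi n \<beta>}"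

lemma decomp1: "a \<in> Poly_Mapping.keys \<alpha> \<Longrightarrow> \<alpha> = (\<alpha> - Poly_Mapping.single a 1) + Poly_Mapping.single a (1::nat)"
  by (rule poly_mapping_eqI) (auto simp: lookup_add lookup_minus lookup_single when_def in_keys_iff)

lemma keys_minus_sub: "Poly_Mapping.keys (\<alpha> - \<beta>) \<subseteq> Poly_Mapping.keys (\<alpha> :: _ \<Rightarrow>\<^sub>0 nat)"
  by (auto simp: in_keys_iff lookup_minus)

lemma vok_minus: "vok n \<alpha> \<Longrightarrow> vok n (\<alpha> - \<beta>)"
  using keys_minus_sub[of \<alpha> \<beta>] unfolding vok_def by (meson subsetD)

lemma vok_add: "vok n \<alpha> \<Longrightarrow> vok n \<beta> \<Longrightarrow> vok n (\<alpha> + \<beta>)"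
  unfolding vok_def keys_add_nat by (meson Un_iff)

lemma vok_single: "length a = n \<Longrightarrow> vok n (Poly_Mapping.single a (1::nat))"
  unfolding vok_def by simp

lemma two_elems: "2 \<le> card X \<Longrightarrow> \<exists>i\<in>X. \<exists>k\<in>X. i \<noteq> k"
proof -
  assume c: "2 \<le> card X"
  then have "X \<noteq> {}" by auto
  then obtain i where i: "i \<in> X" by blast
  show ?thesis
  proof (cases "X - {i} = {}")
    case True
    then have "X = {i}" using i by blast
    then show ?thesis using c by simp
  next
    case False
    then obtain k where "k \<in> X - {i}" by blast
    then show ?thesis using i by blast
  qed
qed

lemma img_swap:
  fixes a v a' v' :: "2 list"
  assumes "\<And>l. l \<le> n \<Longrightarrow> (ext n a' l = ext n a l \<and> ext n v' l = ext n v l) \<or> (ext n a' l = ext n v l \<and> ext n v' l = ext n a l)"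
  shows "img n a + img n v = img n a' + img n v'"
proof -
  have "img n a + img n v = (\<Sum>l\<le>n. Poly_Mapping.single (Suc l, ext n a l) 1 + Poly_Mapping.single (Suc l, ext n v l) 1)"
    unfolding img_def by (simp add: sum.distrib)
  also have "\<dots> = (\<Sum>l\<le>n. Poly_Mapping.single (Suc l, ext n a' l) 1 + Poly_Mapping.single (Suc l, ext n v' l) 1)"
  proof (rule sum.cong)
    fix l assume "l \<in> {..n}"
    then have "l \<le> n" by simp
    from assms[OF this] show "Poly_Mapping.single (Suc l, ext n a l) 1 + Poly_Mapping.single (Suc l, ext n v l) 1 =
      Poly_Mapping.single (Suc l, ext n a' l) 1 + Poly_Mapping.single (Suc l, ext n v' l) (1::nat)"
      by (auto simp: add.commute)
  qed simp
  also have "\<dots> = img n a' + img n v'"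
    unfolding img_def by (simp add: sum.distrib)
  finally show ?thesis .
qed

lemma move:
  fixes \<alpha> :: "2 list \<Rightarrow>\<^sub>0 nat"
  assumes vok: "vok n \<alpha>" and a: "a \<in> Poly_Mapping.keys \<alpha>" and v: "v \<in> Poly_Mapping.keys \<alpha>" and av: "a \<noteq> v"
    and ik: "i \<noteq> k" "i \<le> n" "k \<le> n" and di: "ext n a i \<noteq> ext n v i" and dk: "ext n a k \<noteq> ext n v k"
  shows "\<exists>\<alpha>'. vok n \<alpha>' \<and> map2 (+) a (dl n i k) \<in> Poly_Mapping.keys \<alpha>' \<and> monom_deg \<alpha>' = monom_deg \<alpha>
     \<and> Phi n \<alpha>' = Phi n \<alpha> \<and> monom \<alpha> - monom \<alpha>' \<in> qideal_gen n (Bset n)"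
proof -
  have la: "length a = n" and lv: "length v = n" using vok a v unfolding vok_def by auto
  define a' where "a' = map2 (+) a (dl n i k)"
  define v' where "v' = map2 (+) v (dl n i k)"
  have la': "length a' = n" and lv': "length v' = n" using la lv by (simp_all add: a'_def v'_def)
  have ea': "ext n a' l = (if l = i \<or> l = k then ext n a l + 1 else ext n a l)" if "l \<le> n" for l
    using that la ik by (simp add: a'_def ext_map2 ext_dl)
  have ev': "ext n v' l = (if l = i \<or> l = k then ext n v l + 1 else ext n v l)" if "l \<le> n" for l
    using that lv ik by (simp add: v'_def ext_map2 ext_dl)
  have a'v': "a' \<noteq> v'"
  proof
    assume "a' = v'"
    then have "ext n a i + 1 = ext n v i + 1" using ea'[of i] ev'[of i] ik by simp
    then show False using di by simp
  qed
  define \<alpha>1 where "\<alpha>1 = \<alpha> - Poly_Mapping.single a 1 - Poly_Mapping.single v 1"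
  define \<gamma> where "\<gamma> = Poly_Mapping.single a 1 + Poly_Mapping.single v (1::nat)"
  define \<gamma>' where "\<gamma>' = Poly_Mapping.single a' 1 + Poly_Mapping.single v' (1::nat)"
  have \<alpha>_eq: "\<alpha> = \<alpha>1 + \<gamma>"
    unfolding \<alpha>1_def \<gamma>_def
    by (rule poly_mapping_eqI) (use a v av in \<open>auto simp: lookup_add lookup_minus lookup_single when_def in_keys_iff\<close>)
  define \<alpha>' where "\<alpha>' = \<alpha>1 + \<gamma>'"
  have vok1: "vok n \<alpha>1" unfolding \<alpha>1_def by (intro vok_minus vok)
  have vg: "vok n \<gamma>" unfolding \<gamma>_def by (intro vok_add vok_single la lv)
  have vg': "vok n \<gamma>'" unfolding \<gamma>'_def by (intro vok_add vok_single la' lv')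
  have dg: "monom_deg \<gamma> = 2" unfolding \<gamma>_def by (simp add: monom_deg_add monom_deg_single)
  have dg': "monom_deg \<gamma>' = 2" unfolding \<gamma>'_def by (simp add: monom_deg_add monom_deg_single)
  have swap: "(ext n a' l = ext n a l \<and> ext n v' l = ext n v l) \<or> (ext n a' l = ext n v l \<and> ext n v' l = ext n a l)"
    if "l \<le> n" for l
  proof (cases "l = i \<or> l = k")
    case True
    then have "ext n a l \<noteq> ext n v l" using di dk by auto
    then have "ext n a' l = ext n v l \<and> ext n v' l = ext n a l"
      using ea'[OF that] ev'[OF that] True two_ne[of "ext n a l" "ext n v l"] two_ne[of "ext n v l" "ext n a l"] by auto
    then show ?thesis by blast
  next
    case False
    then show ?thesis using ea'[OF that] ev'[OF that] by simp
  qed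
  have Pg: "Phi n \<gamma> = Phi n \<gamma>'"
    unfolding \<gamma>_def \<gamma>'_def Phi_add Phi_single by (rule img_swap) (rule swap)
  have "vok n \<alpha>'" unfolding \<alpha>'_def by (intro vok_add vok1 vg')
  moreover have "a' \<in> Poly_Mapping.keys \<alpha>'"
    by (simp add: \<alpha>'_def \<gamma>'_def in_keys_iff lookup_add)
  moreover have "monom_deg \<alpha>' = monom_deg \<alpha>"
    by (simp add: \<alpha>'_def \<alpha>_eq monom_deg_add dg dg')
  moreover have "Phi n \<alpha>' = Phi n \<alpha>"
    by (simp add: \<alpha>'_def \<alpha>_eq Phi_add Pg)
  moreover have "monom \<alpha> - monom \<alpha>' \<in> qideal_gen n (Bset n)"
  proof -
    have "monom \<gamma> - monom \<gamma>' \<in> Bset n"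
      unfolding Bset_def using vg vg' dg dg' Pg by (intro CollectI exI[of _ \<gamma>] exI[of _ \<gamma>']) simp
    then have "monom \<gamma> - monom \<gamma>' \<in> qideal_gen n (Bset n)" by (rule qideal_gen_in)
    then have "monom \<alpha>1 * (monom \<gamma> - monom \<gamma>') \<in> qideal_gen n (Bset n)"
      by (rule qideal_mult) (use vok1 in \<open>simp add: in_qring_monom vok_def\<close>)
    moreover have "monom \<alpha>1 * (monom \<gamma> - monom \<gamma>') = monom \<alpha> - monom \<alpha>'"
      by (simp add: \<alpha>'_def \<alpha>_eq monom_add right_diff_distrib)
    ultimately show ?thesis by simp
  qed
  ultimately show ?thesis unfolding a'_def by (intro exI[of _ \<alpha>']) simp
qed



lemma exists_move:
  fixes \<alpha> \<beta> :: "2 list \<Rightarrow>\<^sub>0 nat"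
  assumes vA: "vok n \<alpha>" and vB: "vok n \<beta>" and P: "Phi n \<alpha> = Phi n \<beta>"
    and a: "a \<in> Poly_Mapping.keys \<alpha>" and b: "b \<in> Poly_Mapping.keys \<beta>" and ab: "a \<noteq> b"
    and D_def: "D = {l\<in>{..n}. ext n a l \<noteq> ext n b l}"
  shows "(\<exists>v\<in>Poly_Mapping.keys \<alpha>. \<exists>i k. i \<noteq> k \<and> i \<in> D \<and> k \<in> D \<and> ext n v i = ext n b i \<and> ext n v k = ext n b k) \<or>
         (\<exists>r\<in>Poly_Mapping.keys \<beta>. \<exists>i k. i \<noteq> k \<and> i \<in> D \<and> k \<in> D \<and> ext n r i = ext n a i \<and> ext n r k = ext n a k)"
proof (rule ccontr)
  assume neg: "\<not> ?thesis"
  have la: "length a = n" and lb: "length b = n" using vA vB a b unfolding vok_def by auto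
  have Dsub: "D \<subseteq> {..n}" unfolding D_def by blast
  have fD: "finite D" using Dsub finite_subset by blast
  have hA: "card {l\<in>D. ext n v l = ext n b l} \<le> 1" if "v \<in> Poly_Mapping.keys \<alpha>" for v
  proof (rule ccontr)
    assume "\<not> ?thesis"
    then have "2 \<le> card {l\<in>D. ext n v l = ext n b l}" by simp
    then obtain i k where "i \<in> {l\<in>D. ext n v l = ext n b l}" "k \<in> {l\<in>D. ext n v l = ext n b l}" "i \<noteq> k"
      using two_elems by blast
    then show False using neg that by blast
  qed
  have hB: "card {l\<in>D. ext n r l = ext n a l} \<le> 1" if "r \<in> Poly_Mapping.keys \<beta>" for r
  proof (rule ccontr)
    assume "\<not> ?thesis"
    then have "2 \<le> card {l\<in>D. ext n r l = ext n a l}" by simp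
    then obtain i k where "i \<in> {l\<in>D. ext n r l = ext n a l}" "k \<in> {l\<in>D. ext n r l = ext n a l}" "i \<noteq> k"
      using two_elems by blast
    then show False using neg that by blast
  qed
  have cD: "2 \<le> card D"
  proof -
    have "D \<noteq> {}"
    proof
      assume "D = {}"
      then have "\<forall>l\<le>n. ext n a l = ext n b l" unfolding D_def by blast
      then have "a = b" using ext_inj la lb by blast
      then show False using ab by simp
    qed
    then have "card D \<noteq> 0" using fD by simp
    moreover have "card D \<noteq> 1" unfolding D_def by (rule card_D_ne1[OF la lb])
    ultimately show ?thesis by linarith
  qed
  define agr where "agr v = card {l\<in>D. ext n v l = ext n a l}" for v :: "2 list"
  define d where "d = monom_deg \<alpha>"
  have dB: "d = monom_deg \<beta>" unfolding d_def by (rule Phi_deg[OF P])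
  have S_eq: "(\<Sum>v\<in>Poly_Mapping.keys \<alpha>. Poly_Mapping.lookup \<alpha> v * agr v) =
              (\<Sum>v\<in>Poly_Mapping.keys \<beta>. Poly_Mapping.lookup \<beta> v * agr v)"
    unfolding agr_def using count_identity[OF Dsub, of \<alpha> a] count_identity[OF Dsub, of \<beta> a] P by simp
  have low: "d * card D < (\<Sum>v\<in>Poly_Mapping.keys \<alpha>. Poly_Mapping.lookup \<alpha> v * agr v) + d"
  proof -
    have pw: "Poly_Mapping.lookup \<alpha> v * card D \<le> Poly_Mapping.lookup \<alpha> v * agr v + Poly_Mapping.lookup \<alpha> v"
      if "v \<in> Poly_Mapping.keys \<alpha>" for v
    proof -
      have sub: "{l\<in>D. ext n v l \<noteq> ext n a l} \<subseteq> {l\<in>D. ext n v l = ext n b l}"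
      proof
        fix l assume "l \<in> {l\<in>D. ext n v l \<noteq> ext n a l}"
        then have "l \<in> D" "ext n v l \<noteq> ext n a l" by auto
        moreover have "ext n a l \<noteq> ext n b l" using \<open>l \<in> D\<close> unfolding D_def by blast
        ultimately show "l \<in> {l\<in>D. ext n v l = ext n b l}" using two_third by blast
      qed
      have fin2: "finite {l\<in>D. ext n v l = ext n b l}" using fD by simp
      have "card {l\<in>D. ext n v l \<noteq> ext n a l} \<le> card {l\<in>D. ext n v l = ext n b l}"
        by (rule card_mono[OF fin2 sub])
      then have c1: "card {l\<in>D. ext n v l \<noteq> ext n a l} \<le> 1" using hA[OF that] by (rule le_trans)
      have "D = {l\<in>D. ext n v l = ext n a l} \<union> {l\<in>D. ext n v l \<noteq> ext n a l}" by blast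
      then have "card D = card ({l\<in>D. ext n v l = ext n a l} \<union> {l\<in>D. ext n v l \<noteq> ext n a l})" by simp
      also have "\<dots> \<le> agr v + card {l\<in>D. ext n v l \<noteq> ext n a l}"
        unfolding agr_def by (rule card_Un_le)
      finally have "card D \<le> agr v + card {l\<in>D. ext n v l \<noteq> ext n a l}" .
      with c1 have "card D \<le> agr v + 1" by linarith
      then have "Poly_Mapping.lookup \<alpha> v * card D \<le> Poly_Mapping.lookup \<alpha> v * (agr v + 1)"
        by (rule mult_le_mono2)
      then show ?thesis by (simp add: algebra_simps)
    qed
    have agra: "agr a = card D" unfolding agr_def by simp
    have "a \<in> Poly_Mapping.keys \<alpha>" by (rule a)
    then have pos: "0 < Poly_Mapping.lookup \<alpha> a" by (simp add: in_keys_iff)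
    have "(\<Sum>v\<in>Poly_Mapping.keys \<alpha>. Poly_Mapping.lookup \<alpha> v * card D) <
          (\<Sum>v\<in>Poly_Mapping.keys \<alpha>. Poly_Mapping.lookup \<alpha> v * agr v + Poly_Mapping.lookup \<alpha> v)"
    proof (rule sum_strict_mono_ex1)
      show "finite (Poly_Mapping.keys \<alpha>)" by simp
      show "\<forall>x\<in>Poly_Mapping.keys \<alpha>. Poly_Mapping.lookup \<alpha> x * card D \<le> Poly_Mapping.lookup \<alpha> x * agr x + Poly_Mapping.lookup \<alpha> x"
        using pw by blast
      show "\<exists>x\<in>Poly_Mapping.keys \<alpha>. Poly_Mapping.lookup \<alpha> x * card D < Poly_Mapping.lookup \<alpha> x * agr x + Poly_Mapping.lookup \<alpha> x"
        using a agra pos by (intro bexI[of _ a]) simp_all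
    qed
    then show ?thesis unfolding d_def monom_deg_def by (simp add: sum.distrib sum_distrib_right)
  qed
  have high: "(\<Sum>v\<in>Poly_Mapping.keys \<beta>. Poly_Mapping.lookup \<beta> v * agr v) + 1 \<le> d"
  proof -
    have "(\<Sum>v\<in>Poly_Mapping.keys \<beta>. Poly_Mapping.lookup \<beta> v * agr v) + Poly_Mapping.lookup \<beta> b =
          (\<Sum>v\<in>Poly_Mapping.keys \<beta>. Poly_Mapping.lookup \<beta> v * agr v + (if v = b then Poly_Mapping.lookup \<beta> v else 0))"
      using b by (simp add: sum.distrib)
    also have "\<dots> \<le> (\<Sum>v\<in>Poly_Mapping.keys \<beta>. Poly_Mapping.lookup \<beta> v)"
    proof (rule sum_mono)
      fix v assume v: "v \<in> Poly_Mapping.keys \<beta>"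
      show "Poly_Mapping.lookup \<beta> v * agr v + (if v = b then Poly_Mapping.lookup \<beta> v else 0) \<le> Poly_Mapping.lookup \<beta> v"
      proof (cases "v = b")
        case True
        have "\<forall>l\<in>D. ext n b l \<noteq> ext n a l" unfolding D_def by auto
        then have E0: "{l\<in>D. ext n b l = ext n a l} = {}" by blast
        have "agr b = 0" unfolding agr_def E0 by simp
        then show ?thesis using True by simp
      next
        case False
        have "agr v \<le> 1" unfolding agr_def by (rule hB[OF v])
        then have "Poly_Mapping.lookup \<beta> v * agr v \<le> Poly_Mapping.lookup \<beta> v"
          using mult_le_mono2[of "agr v" 1 "Poly_Mapping.lookup \<beta> v"] by simp
        then show ?thesis using False by simp
      qed
    qed
    also have "\<dots> = d" unfolding dB monom_deg_def by simp
    finally show ?thesis using b by (simp add: in_keys_iff)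
  qed
  have "d * 2 \<le> d * card D" using cD by (rule mult_le_mono2)
  then show False using low high S_eq by linarith
qed



lemma core:
  fixes \<alpha> \<beta> :: "2 list \<Rightarrow>\<^sub>0 nat"
  assumes "vok n \<alpha>" "vok n \<beta>" "Phi n \<alpha> = Phi n \<beta>"
  shows "monom \<alpha> - monom \<beta> \<in> qideal_gen n (Bset n)"
proof -
  have main: "\<forall>\<alpha> \<beta> :: 2 list \<Rightarrow>\<^sub>0 nat. monom_deg \<alpha> = d \<longrightarrow> vok n \<alpha> \<longrightarrow> vok n \<beta> \<longrightarrow> Phi n \<alpha> = Phi n \<beta> \<longrightarrow>
      monom \<alpha> - monom \<beta> \<in> qideal_gen n (Bset n)" for d
  proof (induction d)
    case 0
    show ?case
    proof (intro allI impI)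
      fix \<alpha> \<beta> :: "2 list \<Rightarrow>\<^sub>0 nat"
      assume h: "monom_deg \<alpha> = 0" "vok n \<alpha>" "vok n \<beta>" "Phi n \<alpha> = Phi n \<beta>"
      have "\<alpha> = 0" using h(1) by (rule monom_deg_zero)
      moreover have "monom_deg \<beta> = 0" using Phi_deg[OF h(4)] h(1) by simp
      then have "\<beta> = 0" by (rule monom_deg_zero)
      ultimately show "monom \<alpha> - monom \<beta> \<in> qideal_gen n (Bset n)" by (simp add: qideal_zero)
    qed
  next
    case (Suc d)
    have inner: "\<forall>\<alpha> \<beta> :: 2 list \<Rightarrow>\<^sub>0 nat. \<forall>a b. monom_deg \<alpha> = Suc d \<longrightarrow> vok n \<alpha> \<longrightarrow> vok n \<beta> \<longrightarrow> Phi n \<alpha> = Phi n \<beta> \<longrightarrow>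
       a \<in> Poly_Mapping.keys \<alpha> \<longrightarrow> b \<in> Poly_Mapping.keys \<beta> \<longrightarrow> card {l\<in>{..n}. ext n a l \<noteq> ext n b l} = N \<longrightarrow>
       monom \<alpha> - monom \<beta> \<in> qideal_gen n (Bset n)" for N
    proof (induction N rule: less_induct)
      case (less N)
      show ?case
      proof (intro allI impI)
        fix \<alpha> \<beta> :: "2 list \<Rightarrow>\<^sub>0 nat" and a b
        assume h: "monom_deg \<alpha> = Suc d" "vok n \<alpha>" "vok n \<beta>" "Phi n \<alpha> = Phi n \<beta>"
          "a \<in> Poly_Mapping.keys \<alpha>" "b \<in> Poly_Mapping.keys \<beta>" "card {l\<in>{..n}. ext n a l \<noteq> ext n b l} = N"
        have la: "length a = n" using h(2,5) unfolding vok_def by blast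
        have lb: "length b = n" using h(3,6) unfolding vok_def by blast
        show "monom \<alpha> - monom \<beta> \<in> qideal_gen n (Bset n)"
        proof (cases "a = b")
          case True
          define \<alpha>0 where "\<alpha>0 = \<alpha> - Poly_Mapping.single a 1"
          define \<beta>0 where "\<beta>0 = \<beta> - Poly_Mapping.single a 1"
          have ea: "\<alpha> = \<alpha>0 + Poly_Mapping.single a 1" unfolding \<alpha>0_def by (rule decomp1[OF h(5)])
          have eb: "\<beta> = \<beta>0 + Poly_Mapping.single a 1" unfolding \<beta>0_def using h(6) True by (intro decomp1) simp
          have pa: "Phi n \<alpha> = Phi n \<alpha>0 + img n a" by (subst ea) (simp only: Phi_add Phi_single)
          have pb: "Phi n \<beta> = Phi n \<beta>0 + img n a" by (subst eb) (simp only: Phi_add Phi_single)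
          have P0: "Phi n \<alpha>0 = Phi n \<beta>0" using h(4) pa pb by simp
          have "monom_deg \<alpha> = monom_deg \<alpha>0 + 1" by (subst ea) (simp add: monom_deg_add monom_deg_single)
          then have d0: "monom_deg \<alpha>0 = d" using h(1) by simp
          have v0: "vok n \<alpha>0" unfolding \<alpha>0_def by (rule vok_minus[OF h(2)])
          have w0: "vok n \<beta>0" unfolding \<beta>0_def by (rule vok_minus[OF h(3)])
          have "monom \<alpha>0 - monom \<beta>0 \<in> qideal_gen n (Bset n)"
            using Suc.IH d0 v0 w0 P0 by blast
          then have "monom (Poly_Mapping.single a 1) * (monom \<alpha>0 - monom \<beta>0) \<in> qideal_gen n (Bset n)"
            by (rule qideal_mult) (rule in_qring_monom, use la in simp)
          moreover have "monom (Poly_Mapping.single a 1) * (monom \<alpha>0 - monom \<beta>0) = monom \<alpha> - monom \<beta>"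
          proof -
            have "monom \<alpha> - monom \<beta> = monom (\<alpha>0 + Poly_Mapping.single a 1) - monom (\<beta>0 + Poly_Mapping.single a 1)"
              using ea eb by simp
            then show ?thesis by (simp add: monom_add right_diff_distrib mult.commute)
          qed
          ultimately show ?thesis by simp
        next
          case False
          define D where "D = {l\<in>{..n}. ext n a l \<noteq> ext n b l}"
          have DN: "card D = N" using h(7) unfolding D_def .
          have fD: "finite D" unfolding D_def by simp
          have Dle: "l \<le> n" if "l \<in> D" for l using that unfolding D_def by blast
          have Dne: "ext n a l \<noteq> ext n b l" if "l \<in> D" for l using that unfolding D_def by blast
          have newcard: "card (D - {i, k}) < N" "card (D - {i, k}) = N - 2" if "i \<noteq> k" "i \<in> D" "k \<in> D" for i k
          proof -
            have sub: "{i, k} \<subseteq> D" using that by blast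
            have "card {i, k} = 2" using that by simp
            moreover have "card {i, k} \<le> card D" by (rule card_mono[OF fD sub])
            moreover have "card (D - {i, k}) = card D - card {i, k}" by (rule card_Diff_subset) (simp_all add: that)
            ultimately show "card (D - {i, k}) < N" "card (D - {i, k}) = N - 2" using DN by simp_all
          qed
          have flip: "ext n (map2 (+) x (dl n i k)) l = (if l = i \<or> l = k then ext n x l + 1 else ext n x l)"
            if "length x = n" "i \<noteq> k" "i \<le> n" "k \<le> n" "l \<le> n" for x i k l
            using that by (simp add: ext_map2 ext_dl)
          from exists_move[OF h(2) h(3) h(4) h(5) h(6) False D_def]
          show ?thesis
          proof (elim disjE bexE exE conjE)
            fix v i k
            assume v: "v \<in> Poly_Mapping.keys \<alpha>" and ik: "i \<noteq> k" "i \<in> D" "k \<in> D"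
              and vi: "ext n v i = ext n b i" and vk: "ext n v k = ext n b k"
            have di: "ext n a i \<noteq> ext n v i" using Dne[OF ik(2)] vi by simp
            have dk: "ext n a k \<noteq> ext n v k" using Dne[OF ik(3)] vk by simp
            have av: "a \<noteq> v" using di by blast
            have iln: "i \<le> n" "k \<le> n" using Dle ik by blast+
            from move[OF h(2) h(5) v av ik(1) iln di dk]
            obtain \<alpha>' where m: "vok n \<alpha>'" "map2 (+) a (dl n i k) \<in> Poly_Mapping.keys \<alpha>'"
              "monom_deg \<alpha>' = monom_deg \<alpha>" "Phi n \<alpha>' = Phi n \<alpha>" "monom \<alpha> - monom \<alpha>' \<in> qideal_gen n (Bset n)"
              by blast
            define a' where "a' = map2 (+) a (dl n i k)"
            have "{l\<in>{..n}. ext n a' l \<noteq> ext n b l} = D - {i, k}"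
            proof (intro set_eqI iffI)
              fix l assume l: "l \<in> {l\<in>{..n}. ext n a' l \<noteq> ext n b l}"
              then have ln: "l \<le> n" by simp
              show "l \<in> D - {i, k}"
              proof (cases "l = i \<or> l = k")
                case True
                then have "l \<in> D" using ik by blast
                then have "ext n a l + 1 = ext n b l" using Dne two_ne by blast
                then have "ext n a' l = ext n b l" using flip[OF la ik(1) iln ln] True unfolding a'_def by simp
                then show ?thesis using l by simp
              next
                case False
                then have "ext n a' l = ext n a l" using flip[OF la ik(1) iln ln] unfolding a'_def by simp
                then show ?thesis using l False unfolding D_def by simp
              qed
            next
              fix l assume l: "l \<in> D - {i, k}"
              then have ln: "l \<le> n" and nik: "\<not> (l = i \<or> l = k)" using Dle by blast+
              then have "ext n a' l = ext n a l" using flip[OF la ik(1) iln ln] unfolding a'_def by simp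
              then show "l \<in> {l\<in>{..n}. ext n a' l \<noteq> ext n b l}" using l ln Dne by simp
            qed
            then have cn: "card {l\<in>{..n}. ext n a' l \<noteq> ext n b l} = N - 2" and lt: "N - 2 < N"
              using newcard[OF ik] by simp_all
            have "monom \<alpha>' - monom \<beta> \<in> qideal_gen n (Bset n)"
              using less.IH[OF lt] m(1,2,3,4) h(1,3,4,6) cn unfolding a'_def by simp
            then have "(monom \<alpha> - monom \<alpha>') + (monom \<alpha>' - monom \<beta>) \<in> qideal_gen n (Bset n)"
              by (rule qideal_add[OF m(5)])
            then show ?thesis by simp
          next
            fix r i k
            assume r: "r \<in> Poly_Mapping.keys \<beta>" and ik: "i \<noteq> k" "i \<in> D" "k \<in> D"
              and ri: "ext n r i = ext n a i" and rk: "ext n r k = ext n a k"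
            have di: "ext n b i \<noteq> ext n r i" using Dne[OF ik(2)] ri by simp
            have dk: "ext n b k \<noteq> ext n r k" using Dne[OF ik(3)] rk by simp
            have br: "b \<noteq> r" using di by blast
            have iln: "i \<le> n" "k \<le> n" using Dle ik by blast+
            from move[OF h(3) h(6) r br ik(1) iln di dk]
            obtain \<beta>' where m: "vok n \<beta>'" "map2 (+) b (dl n i k) \<in> Poly_Mapping.keys \<beta>'"
              "monom_deg \<beta>' = monom_deg \<beta>" "Phi n \<beta>' = Phi n \<beta>" "monom \<beta> - monom \<beta>' \<in> qideal_gen n (Bset n)"
              by blast
            define b' where "b' = map2 (+) b (dl n i k)"
            have "{l\<in>{..n}. ext n a l \<noteq> ext n b' l} = D - {i, k}"
            proof (intro set_eqI iffI)
              fix l assume l: "l \<in> {l\<in>{..n}. ext n a l \<noteq> ext n b' l}"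
              then have ln: "l \<le> n" by simp
              show "l \<in> D - {i, k}"
              proof (cases "l = i \<or> l = k")
                case True
                then have "l \<in> D" using ik by blast
                then have "ext n b l + 1 = ext n a l" using Dne two_ne by metis
                then have "ext n b' l = ext n a l" using flip[OF lb ik(1) iln ln] True unfolding b'_def by simp
                then show ?thesis using l by simp
              next
                case False
                then have "ext n b' l = ext n b l" using flip[OF lb ik(1) iln ln] unfolding b'_def by simp
                then show ?thesis using l False unfolding D_def by simp
              qed
            next
              fix l assume l: "l \<in> D - {i, k}"
              then have ln: "l \<le> n" and nik: "\<not> (l = i \<or> l = k)" using Dle by blast+
              then have "ext n b' l = ext n b l" using flip[OF lb ik(1) iln ln] unfolding b'_def by simp
              then show "l \<in> {l\<in>{..n}. ext n a l \<noteq> ext n b' l}" using l ln Dne by simp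
            qed
            then have cn: "card {l\<in>{..n}. ext n a l \<noteq> ext n b' l} = N - 2" and lt: "N - 2 < N"
              using newcard[OF ik] by simp_all
            have P': "Phi n \<alpha> = Phi n \<beta>'" using m(4) h(4) by simp
            have "monom \<alpha> - monom \<beta>' \<in> qideal_gen n (Bset n)"
              using less.IH[OF lt] m(1,2) h(1,2,5) P' cn unfolding b'_def by simp
            then have "(monom \<alpha> - monom \<beta>') - (monom \<beta> - monom \<beta>') \<in> qideal_gen n (Bset n)"
              using m(5) by (rule qideal_diff)
            then show ?thesis by simp
          qed
        qed
      qed
    qed
    show ?case
    proof (intro allI impI)
      fix \<alpha> \<beta> :: "2 list \<Rightarrow>\<^sub>0 nat"
      assume h: "monom_deg \<alpha> = Suc d" "vok n \<alpha>" "vok n \<beta>" "Phi n \<alpha> = Phi n \<beta>"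
      have hb: "monom_deg \<beta> = Suc d" using Phi_deg[OF h(4)] h(1) by simp
      have "\<alpha> \<noteq> 0" using h(1) by (auto simp: monom_deg_def)
      then obtain a where a: "a \<in> Poly_Mapping.keys \<alpha>" by (metis keys_eq_empty ex_in_conv)
      have "\<beta> \<noteq> 0" using hb by (auto simp: monom_deg_def)
      then obtain b where b: "b \<in> Poly_Mapping.keys \<beta>" by (metis keys_eq_empty ex_in_conv)
      show "monom \<alpha> - monom \<beta> \<in> qideal_gen n (Bset n)"
        using inner[rule_format, OF h a b refl] .
    qed
  qed
  show ?thesis using main[rule_format, OF refl assms] .
qed



lemma ker:
  fixes p :: "2 list cpoly"
  shows "in_qring n p \<Longrightarrow> toric_hom n p = 0 \<Longrightarrow> p \<in> qideal_gen n (Bset n)"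
proof (induction "card (Poly_Mapping.keys p)" arbitrary: p rule: less_induct)
  case less
  show ?case
  proof (cases "p = 0")
    case True
    then show ?thesis by (simp add: qideal_zero)
  next
    case False
    then obtain m where m: "m \<in> Poly_Mapping.keys p" by (metis keys_eq_empty ex_in_conv)
    define c where "c = Poly_Mapping.lookup p m"
    have c0: "c \<noteq> 0" using m unfolding c_def by (simp add: in_keys_iff)
    have look: "Poly_Mapping.lookup (toric_hom n p) (Phi n m) =
       (\<Sum>m'\<in>Poly_Mapping.keys p. if Phi n m' = Phi n m then Poly_Mapping.lookup p m' else 0)"
      unfolding toric_hom_eq lookup_sum by (rule sum.cong) (simp_all add: lookup_single when_def)
    have "\<exists>m'\<in>Poly_Mapping.keys p. m' \<noteq> m \<and> Phi n m' = Phi n m"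
    proof (rule ccontr)
      assume nn: "\<not> ?thesis"
      have "(\<Sum>m'\<in>Poly_Mapping.keys p. if Phi n m' = Phi n m then Poly_Mapping.lookup p m' else 0) =
            (\<Sum>m'\<in>Poly_Mapping.keys p. if m' = m then Poly_Mapping.lookup p m' else 0)"
      proof (rule sum.cong)
        fix x assume "x \<in> Poly_Mapping.keys p"
        then show "(if Phi n x = Phi n m then Poly_Mapping.lookup p x else 0) = (if x = m then Poly_Mapping.lookup p x else 0)"
          using nn by auto
      qed simp
      also have "\<dots> = c" using m by (simp add: c_def)
      finally have "Poly_Mapping.lookup (toric_hom n p) (Phi n m) = c" using look by simp
      then show False using less.prems(2) c0 by simp
    qed
    then obtain m' where m': "m' \<in> Poly_Mapping.keys p" "m' \<noteq> m" "Phi n m' = Phi n m" by blast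
    define p' where "p' = p - Poly_Mapping.single m c + Poly_Mapping.single m' c"
    have lp': "Poly_Mapping.lookup p' x = Poly_Mapping.lookup p x - (if x = m then c else 0) + (if x = m' then c else 0)" for x
      unfolding p'_def by (simp add: lookup_add lookup_minus lookup_single when_def eq_commute)
    have ksub: "Poly_Mapping.keys p' \<subseteq> Poly_Mapping.keys p - {m}"
    proof
      fix x assume x: "x \<in> Poly_Mapping.keys p'"
      then have nz: "Poly_Mapping.lookup p' x \<noteq> 0" by (simp add: in_keys_iff)
      show "x \<in> Poly_Mapping.keys p - {m}"
      proof (cases "x = m")
        case True
        then have "Poly_Mapping.lookup p' x = 0" using lp'[of x] m'(2) by (simp add: c_def)
        then show ?thesis using nz by simp
      next
        case False
        show ?thesis
        proof (cases "x = m'")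
          case True then show ?thesis using m' False by simp
        next
          case False2: False
          then have "Poly_Mapping.lookup p x \<noteq> 0" using nz lp'[of x] False by simp
          then show ?thesis using False by (simp add: in_keys_iff)
        qed
      qed
    qed
    have "card (Poly_Mapping.keys p') \<le> card (Poly_Mapping.keys p - {m})" by (rule card_mono) (simp_all add: ksub)
    also have "\<dots> < card (Poly_Mapping.keys p)"
    proof -
      have "0 < card (Poly_Mapping.keys p)" using False by (simp add: card_gt_0_iff)
      then show ?thesis using m by simp
    qed
    finally have lt: "card (Poly_Mapping.keys p') < card (Poly_Mapping.keys p)" .
    have qp': "in_qring n p'" using less.prems(1) ksub unfolding in_qring_def by blast
    have tp': "toric_hom n p' = 0"
      unfolding p'_def using less.prems(2) m'(3) by (simp add: toric_hom_add toric_hom_diff toric_hom_single)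
    have J1: "p' \<in> qideal_gen n (Bset n)" by (rule less.hyps[OF lt qp' tp'])
    have vm: "vok n m" "vok n m'" using less.prems(1) m m'(1) unfolding in_qring_def vok_def by blast+
    have "monom m - monom m' \<in> qideal_gen n (Bset n)" by (rule core[OF vm m'(3)[symmetric]])
    then have J2: "Poly_Mapping.single 0 c * (monom m - monom m') \<in> qideal_gen n (Bset n)"
      by (rule qideal_mult) simp
    have "p = p' + Poly_Mapping.single 0 c * (monom m - monom m')"
      unfolding p'_def by (simp add: monom_def mult_single right_diff_distrib)
    then show ?thesis using qideal_add[OF J1 J2] by simp
  qed
qed

lemma gen_sub_ker:
  fixes p :: "2 list cpoly"
  assumes "p \<in> qideal_gen n (Bset n)"
  shows "p \<in> toric_ideal n"
proof -
  obtain F r where F: "finite F" "F \<subseteq> Bset n" "\<forall>s\<in>F. in_qring n (r s)" "p = (\<Sum>s\<in>F. r s * s)"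
    using assms unfolding qideal_gen_def by blast
  have sB: "\<exists>\<alpha> \<beta>. s = monom \<alpha> - monom \<beta> \<and> vok n \<alpha> \<and> vok n \<beta> \<and> Phi n \<alpha> = Phi n \<beta>" if "s \<in> F" for s
    using that F(2) unfolding Bset_def by blast
  have "in_qring n (r s * s)" if sF: "s \<in> F" for s
  proof -
    obtain \<alpha> \<beta> where ab: "s = monom \<alpha> - monom \<beta>" "vok n \<alpha>" "vok n \<beta>" using sB[OF sF] by blast
    have "in_qring n (monom \<alpha> + - monom \<beta>)"
      using ab by (intro in_qring_add in_qring_uminus in_qring_monom) (simp_all add: vok_def)
    then have "in_qring n s" using ab(1) by simp
    then show ?thesis using F(3) sF by (intro in_qring_mult) simp_all
  qed
  then have "in_qring n p" using F(4) by (simp add: in_qring_sum)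
  moreover have "toric_hom n (r s * s) = 0" if sF: "s \<in> F" for s
  proof -
    obtain \<alpha> \<beta> where ab: "s = monom \<alpha> - monom \<beta>" "Phi n \<alpha> = Phi n \<beta>" using sB[OF sF] by blast
    show ?thesis using ab toric_hom_binom by simp
  qed
  then have "toric_hom n p = 0" using F(4) by (simp add: toric_hom_sum)
  ultimately show ?thesis unfolding toric_ideal_def by simp
qed

theorem theorem5p2:
  fixes n :: nat
  assumes "n \<ge> 3"
  shows "\<exists>B. (\<forall>b\<in>B. deg2_binomial n b) \<and>
             (toric_ideal n :: (2 list) cpoly set) = qideal_gen n B"
proof (rule exI[of _ "Bset n"], intro conjI)
  show "\<forall>b\<in>(Bset n :: 2 list cpoly set). deg2_binomial n b"
    unfolding Bset_def deg2_binomial_def vok_def by blast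
  show "(toric_ideal n :: (2 list) cpoly set) = qideal_gen n (Bset n)"
  proof
    show "(toric_ideal n :: 2 list cpoly set) \<subseteq> qideal_gen n (Bset n)"
    proof (rule subsetI)
      fix p :: "2 list cpoly" assume "p \<in> toric_ideal n"
      then show "p \<in> qideal_gen n (Bset n)" by (intro ker) (simp_all add: toric_ideal_def)
    qed
    show "qideal_gen n (Bset n) \<subseteq> (toric_ideal n :: (2 list) cpoly set)"
      using gen_sub_ker by blast
  qed
qed

end
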